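(* Let $A \subset \mathbb{Z}^d$ be a finite set such that $A - A$ generates $\mathbb{Z}^d$ additively and its convex hull $\Delta_A$ is a $d$-dimensional simplex. Then there exists a polynomial $p \in \mathbb{Q}[x]$ such that $|hA| = p(h)$ for all integers $h \geq 0$ with $h \geq \mathrm{vol}(\Delta_A)\cdot (d+1)! - 1 - 3d$.
   Context: For integer $h \geq 0$, $hA = \{a_1 + \cdots + a_h : a_i \in A\}$, with $0A = \{0\}$. $\mathrm{vol}(\Delta_A)$ denotes the $d$-dimensional volume of the convex hull of $A$. *)

theory Defs
  imports "HOL-Analysis.Analysis" "HOL-Computational_Algebra.Polynomial"
begin

definition int_points :: "(real ^ 'n) set" where
  "int_points = {x. \<forall>i. x $ i \<in> \<int>}"

definition add_subgroup_gen :: "'a::ab_group_add set \<Rightarrow> 'a set" where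
  "add_subgroup_gen S = \<Inter>{G. S \<subseteq> G \<and> 0 \<in> G \<and> (\<forall>x\<in>G. \<forall>y\<in>G. x - y \<in> G)}"

definition diffset :: "'a::ab_group_add set \<Rightarrow> 'a set" where
  "diffset A = {a - b | a b. a \<in> A \<and> b \<in> A}"

fun sumset :: "nat \<Rightarrow> 'a::monoid_add set \<Rightarrow> 'a set" where
  "sumset 0 A = {0}"
| "sumset (Suc h) A = {x + y | x y. x \<in> sumset h A \<and> y \<in> A}"

end

theory Submission
  imports Defs "HOL-Library.Multiset" "HOL-Real_Asymp.Real_Asymp"
begin

lemma binom_prod:
  "of_nat ((m + r) choose r) * fact r = (\<Prod>j\<in>{1..r}. (of_nat m + of_nat j :: 'a::field_char_0))"
proof (induction r)
  case 0 then show ?case by simp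
next
  case (Suc r)
  have e: "Suc (m + r) * ((m + r) choose r) = (Suc (m + r) choose Suc r) * Suc r"
    by (rule Suc_times_binomial_eq)
  have "(of_nat ((m + Suc r) choose Suc r) :: 'a) * fact (Suc r)
        = of_nat ((Suc (m + r) choose Suc r) * Suc r) * fact r"
    by (simp add: fact_Suc algebra_simps)
  also have "\<dots> = of_nat (Suc (m + r)) * (of_nat ((m + r) choose r) * fact r)"
    by (simp only: e[symmetric] of_nat_mult mult.assoc)
  also have "\<dots> = (\<Prod>j\<in>{1..Suc r}. (of_nat m + of_nat j :: 'a))"
    using Suc by (simp add: prod.nat_ivl_Suc' algebra_simps)
  finally show ?case .
qed

lemma binom_poly:
  fixes r :: nat and s :: int
  shows "\<exists>q::rat poly. \<forall>n::int. n \<ge> s - int r \<longrightarrow>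
     poly q (of_int n) = of_nat (if n < s then 0 else (Suc r + nat (n - s) - 1) choose nat (n - s))"
proof -
  define q where "q = smult (1 / fact r) (\<Prod>j\<in>{1..r}. [:of_int (int j - s), 1:] :: rat poly)"
  have pq: "poly q x = (\<Prod>j\<in>{1..r}. x + of_int (int j - s)) / fact r" for x
    by (simp add: q_def poly_prod add.commute)
  show ?thesis
  proof (intro exI allI impI)
    fix n :: int assume n: "n \<ge> s - int r"
    show "poly q (of_int n) = of_nat (if n < s then 0 else (Suc r + nat (n - s) - 1) choose nat (n - s))"
    proof (cases "n < s")
      case True
      have "nat (s - n) \<in> {1..r}" using True n by auto
      moreover have "of_int n + of_int (int (nat (s - n)) - s) = (0::rat)" using True by simp
      ultimately have "\<exists>j\<in>{1..r}. (of_int n::rat) + of_int (int j - s) = 0"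
        by (intro bexI[of _ "nat (s - n)"]) auto
      then have "(\<Prod>j\<in>{1..r}. (of_int n::rat) + of_int (int j - s)) = 0"
        by (intro prod_zero) auto
      then show ?thesis using True by (simp add: pq)
    next
      case False
      define m where "m = nat (n - s)"
      have nm: "n = s + int m" using False by (simp add: m_def)
      have "(\<Prod>j\<in>{1..r}. (of_int n::rat) + of_int (int j - s)) = (\<Prod>j\<in>{1..r}. of_nat m + of_nat j)"
        by (intro prod.cong) (auto simp: nm)
      also have "\<dots> = of_nat ((m + r) choose r) * fact r" by (rule binom_prod[symmetric])
      finally show ?thesis using False
        by (simp add: pq m_def[symmetric] binomial_symmetric[of r "m + r", simplified] add.commute)
    qed
  qed
qed

lemma finite_submsets: "finite {t. t \<subseteq># (Cm::'a multiset)}"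
proof -
  have "{t. t \<subseteq># Cm} \<subseteq> (\<Union>n\<le>size Cm. multisets_of_size (set_mset Cm) n)"
    by (auto simp: multisets_of_size_def size_mset_mono intro: mset_subset_eqD)
  moreover have "finite (\<Union>n\<le>size Cm. multisets_of_size (set_mset Cm) n)"
    by auto
  ultimately show ?thesis by (rule finite_subset)
qed

lemma size_as_sum:
  assumes "finite I" "set_mset t \<subseteq> I"
  shows "size t = (\<Sum>i\<in>I. count t i)"
proof -
  have "size t = (\<Sum>i\<in>set_mset t. count t i)" by (rule size_multiset_overloaded_eq)
  also have "\<dots> = (\<Sum>i\<in>I. count t i)"
    using assms by (intro sum.mono_neutral_left) (auto simp: not_in_iff)
  finally show ?thesis .
qed

lemma trunc_fibre_card:
  fixes I :: "'a set" and c :: nat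
  assumes fin: "finite I"
  defines "Cm \<equiv> (\<Sum>i\<in>I. replicate_mset c i)"
  assumes t: "t \<subseteq># Cm"
  defines "K \<equiv> {i\<in>I. count t i = c}"
  shows "card {Y \<in> multisets_of_size I n. Y \<inter># Cm = t} =
         (if n < size t then 0 else (card K + (n - size t) - 1) choose (n - size t))"
proof -
  have cCm: "count Cm i = (if i \<in> I then c else 0)" for i
    using fin by (simp add: Cm_def count_sum)
  have ct: "count t i \<le> count Cm i" for i using t by (simp add: subseteq_mset_def)
  have tI: "set_mset t \<subseteq> I"
  proof
    fix i assume "i \<in># t"
    then have "count t i > 0" by simp
    then have "count Cm i > 0" using ct[of i] by linarith
    then show "i \<in> I" using cCm[of i] by (cases "i \<in> I") auto
  qed
  show ?thesis
  proof (cases "n < size t")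
    case True
    have E: "{Y \<in> multisets_of_size I n. Y \<inter># Cm = t} = {}"
    proof safe
      fix Y assume "Y \<in> multisets_of_size I n" "t = Y \<inter># Cm"
      then have "size t \<le> size Y" by (simp add: size_mset_mono)
      then show "Y \<in> {}" using True \<open>Y \<in> multisets_of_size I n\<close> by (simp add: multisets_of_size_def)
    qed
    show ?thesis unfolding E using True by simp
  next
    case False
    have bij: "bij_betw (\<lambda>Y. Y - t) {Y \<in> multisets_of_size I n. Y \<inter># Cm = t} (multisets_of_size K (n - size t))"
    proof (rule bij_betw_byWitness[where f' = "\<lambda>Z. t + Z"])
      show "\<forall>Y\<in>{Y \<in> multisets_of_size I n. Y \<inter># Cm = t}. t + (Y - t) = Y"
        by (auto intro!: multiset_eqI)
      show "\<forall>Z\<in>multisets_of_size K (n - size t). t + Z - t = Z" by simp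
      show "(\<lambda>Y. Y - t) ` {Y \<in> multisets_of_size I n. Y \<inter># Cm = t} \<subseteq> multisets_of_size K (n - size t)"
      proof safe
        fix Y assume Y: "Y \<in> multisets_of_size I n" "t = Y \<inter># Cm"
        have YI: "set_mset Y \<subseteq> I" and sY: "size Y = n" using Y by (auto simp: multisets_of_size_def)
        have "set_mset (Y - Y \<inter># Cm) \<subseteq> K"
        proof
          fix i assume "i \<in> set_mset (Y - Y \<inter># Cm)"
          then have "count Cm i < count Y i" by (simp add: in_diff_count)
          moreover have "i \<in> I" using YI \<open>count Cm i < count Y i\<close> by (metis count_eq_zero_iff not_less0 subsetD)
          ultimately show "i \<in> K" using Y(2) by (simp add: K_def cCm)
        qed
        moreover have "size (Y - Y \<inter># Cm) = n - size (Y \<inter># Cm)"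
          using sY size_Diff_submset[of "Y \<inter># Cm" Y] by (simp only: subset_mset.inf_le1 simp_thms)
        ultimately show "Y - Y \<inter># Cm \<in> multisets_of_size K (n - size (Y \<inter># Cm))"
          using Y(2) by (simp add: multisets_of_size_def)
      qed
      show "(\<lambda>Z. t + Z) ` multisets_of_size K (n - size t) \<subseteq> {Y \<in> multisets_of_size I n. Y \<inter># Cm = t}"
      proof safe
        fix Z assume Z: "Z \<in> multisets_of_size K (n - size t)"
        have ZK: "set_mset Z \<subseteq> K" and sZ: "size Z = n - size t" using Z by (auto simp: multisets_of_size_def)
        show "t + Z \<in> multisets_of_size I n"
          using ZK sZ tI False by (auto simp: multisets_of_size_def K_def)
        show "(t + Z) \<inter># Cm = t"
        proof (rule multiset_eqI)
          fix i
          show "count ((t + Z) \<inter># Cm) i = count t i"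
          proof (cases "i \<in> set_mset Z")
            case True
            then have "i \<in> K" using ZK by auto
            then show ?thesis by (auto simp: K_def cCm)
          next
            case False
            then have "count Z i = 0" by (simp add: not_in_iff)
            then show ?thesis using ct[of i] by simp
          qed
        qed
      qed
    qed
    have "finite K" using fin by (simp add: K_def)
    then show ?thesis using bij_betw_same_card[OF bij] False
      by (simp add: card_multisets_of_size)
  qed
qed

lemma count_lemma:
  fixes I :: "'a set" and Gen :: "'a multiset set" and c :: nat
  assumes fin: "finite I" and ne: "I \<noteq> {}"
    and gen: "\<And>U. U \<in> Gen \<Longrightarrow> set_mset U \<subseteq> I \<and> (\<forall>i. count U i \<le> c)"
  shows "\<exists>p::rat poly. \<forall>n::int. n \<ge> int (card I) * (int c - 1) + 1 \<longrightarrow>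
     of_nat (if n < 0 then 0 else card {Y \<in> multisets_of_size I (nat n). \<exists>U\<in>Gen. U \<subseteq># Y})
       = poly p (of_int n)"
proof -
  define Cm where "Cm = (\<Sum>i\<in>I. replicate_mset c i)"
  have cCm: "count Cm i = (if i \<in> I then c else 0)" for i
    using fin by (simp add: Cm_def count_sum)
  define T where "T = {t. t \<subseteq># Cm \<and> (\<exists>U\<in>Gen. U \<subseteq># t)}"
  have finT: "finite T" unfolding T_def by (rule finite_subset[OF _ finite_submsets[of Cm]]) auto
  define KK where "KK t = {i\<in>I. count t i = c}" for t
  define f where "f t n = (if n < int (size t) then 0
      else (card (KK t) + nat (n - int (size t)) - 1) choose nat (n - int (size t)))" for t n
  have UCm: "U \<subseteq># Cm" if "U \<in> Gen" for U
  proof -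
    have "count U i \<le> count Cm i" for i
    proof (cases "i \<in> I")
      case True then show ?thesis using gen[OF that] cCm by simp
    next
      case False then have "i \<notin># U" using gen[OF that] by auto
      then show ?thesis by (simp add: not_in_iff)
    qed
    then show ?thesis by (simp add: subseteq_mset_def)
  qed
  have claim1: "(if n < 0 then 0 else card {Y \<in> multisets_of_size I (nat n). \<exists>U\<in>Gen. U \<subseteq># Y})
      = (\<Sum>t\<in>T. f t n)" for n :: int
  proof (cases "n < 0")
    case True
    then show ?thesis by (simp add: f_def)
  next
    case False
    have eq: "{Y \<in> multisets_of_size I (nat n). \<exists>U\<in>Gen. U \<subseteq># Y}
        = (\<Union>t\<in>T. {Y \<in> multisets_of_size I (nat n). Y \<inter># Cm = t})"
    proof (rule set_eqI, rule iffI)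
      fix Y assume "Y \<in> {Y \<in> multisets_of_size I (nat n). \<exists>U\<in>Gen. U \<subseteq># Y}"
      then obtain U where Y: "Y \<in> multisets_of_size I (nat n)" and U: "U \<in> Gen" "U \<subseteq># Y" by blast
      have "U \<subseteq># Y \<inter># Cm" using UCm[OF U(1)] U(2) by simp
      then have "Y \<inter># Cm \<in> T" using U(1) unfolding T_def by auto
      then show "Y \<in> (\<Union>t\<in>T. {Y \<in> multisets_of_size I (nat n). Y \<inter># Cm = t})"
        using Y by blast
    next
      fix Y assume "Y \<in> (\<Union>t\<in>T. {Y \<in> multisets_of_size I (nat n). Y \<inter># Cm = t})"
      then obtain t where "t \<in> T" "Y \<in> multisets_of_size I (nat n)" "Y \<inter># Cm = t" by blast
      moreover obtain U where "U \<in> Gen" "U \<subseteq># t" using \<open>t \<in> T\<close> unfolding T_def by blast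
      ultimately have "U \<subseteq># Y" by auto
      then show "Y \<in> {Y \<in> multisets_of_size I (nat n). \<exists>U\<in>Gen. U \<subseteq># Y}"
        using \<open>U \<in> Gen\<close> \<open>Y \<in> multisets_of_size I (nat n)\<close> by blast
    qed
    have "card {Y \<in> multisets_of_size I (nat n). \<exists>U\<in>Gen. U \<subseteq># Y}
        = (\<Sum>t\<in>T. card {Y \<in> multisets_of_size I (nat n). Y \<inter># Cm = t})"
      unfolding eq using finT fin by (intro card_UN_disjoint) (auto intro: finite_subset[OF _ finite_multisets_of_size[OF fin]])
    also have "\<dots> = (\<Sum>t\<in>T. f t n)"
    proof (intro sum.cong refl)
      fix t assume "t \<in> T"
      then have "t \<subseteq># Cm" by (simp add: T_def)
      then show "card {Y \<in> multisets_of_size I (nat n). Y \<inter># Cm = t} = f t n"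
        using trunc_fibre_card[OF fin, of t c "nat n"] False
        unfolding Cm_def[symmetric] KK_def[symmetric] f_def
        by (simp add: nat_diff_distrib, arith)
    qed
    finally show ?thesis using False by simp
  qed
  have claim2: "\<exists>q::rat poly. \<forall>n::int. n \<ge> int (card I) * (int c - 1) + 1 \<longrightarrow>
      of_nat (f t n) = poly q (of_int n)" if "t \<in> T" for t
  proof -
    have tC: "t \<subseteq># Cm" using that by (simp add: T_def)
    have ct: "count t i \<le> count Cm i" for i using tC by (simp add: subseteq_mset_def)
    have tI: "set_mset t \<subseteq> I"
    proof
      fix i assume "i \<in># t"
      then have "count t i > 0" by simp
      then have "count Cm i > 0" using ct[of i] by linarith
      then show "i \<in> I" using cCm[of i] by (cases "i \<in> I") auto
    qed
    have KI: "KK t \<subseteq> I" by (auto simp: KK_def)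
    have "int (size t) = (\<Sum>i\<in>I. int (count t i))"
      using size_as_sum[OF fin tI] by simp
    also have "\<dots> \<le> (\<Sum>i\<in>I. (int c - 1) + (if i \<in> KK t then 1 else 0))"
    proof (intro sum_mono)
      fix i assume "i \<in> I"
      have "count t i \<le> c" using ct[of i] cCm[of i] \<open>i \<in> I\<close> by simp
      then show "int (count t i) \<le> int c - 1 + (if i \<in> KK t then 1 else 0)"
        using \<open>i \<in> I\<close> by (auto simp: KK_def)
    qed
    also have "\<dots> = int (card I) * (int c - 1) + int (card (KK t))"
    proof -
      have "(\<Sum>i\<in>I. (if i \<in> KK t then 1 else 0 :: int)) = (\<Sum>i\<in>{i\<in>I. i \<in> KK t}. 1)"
        by (rule sum.inter_filter[symmetric]) (rule fin)
      also have "{i\<in>I. i \<in> KK t} = KK t" using KI by auto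
      finally show ?thesis by (simp add: sum.distrib)
    qed
    finally have sbound: "int (size t) \<le> int (card I) * (int c - 1) + int (card (KK t))" .
    show ?thesis
    proof (cases "KK t = {}")
      case True
      show ?thesis
      proof (intro exI[of _ 0] allI impI)
        fix n :: int assume n: "n \<ge> int (card I) * (int c - 1) + 1"
        then have "n > int (size t)" using sbound True by simp
        then show "of_nat (f t n) = poly 0 (of_int n)"
          using True by (simp add: f_def binomial_eq_0)
      qed
    next
      case False
      have "finite (KK t)" using fin KI finite_subset by blast
      then have cK: "card (KK t) \<ge> 1" using False by (simp add: Suc_le_eq card_gt_0_iff)
      from binom_poly[of "int (size t)" "card (KK t) - 1"] obtain q :: "rat poly" where q: "\<forall>n::int. n \<ge> int (size t) - int (card (KK t) - 1) \<longrightarrow>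
         poly q (of_int n) = of_nat (if n < int (size t) then 0
           else (Suc (card (KK t) - 1) + nat (n - int (size t)) - 1) choose nat (n - int (size t)))"
        by (elim exE) (rule that)
      show ?thesis
      proof (intro exI[of _ q] allI impI)
        fix n :: int assume n: "n \<ge> int (card I) * (int c - 1) + 1"
        then have "n \<ge> int (size t) - int (card (KK t) - 1)" using sbound cK by linarith
        then show "of_nat (f t n) = poly q (of_int n)"
          using q cK by (simp add: f_def)
      qed
    qed
  qed
  then have "\<forall>t\<in>T. \<exists>q::rat poly. \<forall>n::int. n \<ge> int (card I) * (int c - 1) + 1 \<longrightarrow>
      of_nat (f t n) = poly q (of_int n)" by blast
  from bchoice[OF this] obtain q :: "'a multiset \<Rightarrow> rat poly" where q: "\<And>t. t \<in> T \<Longrightarrow> \<forall>n::int. n \<ge> int (card I) * (int c - 1) + 1 \<longrightarrow>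
      of_nat (f t n) = poly (q t) (of_int n)"
    by blast
  show ?thesis
  proof (intro exI[of _ "\<Sum>t\<in>T. q t"] allI impI)
    fix n :: int assume n: "n \<ge> int (card I) * (int c - 1) + 1"
    have "of_nat (if n < 0 then 0 else card {Y \<in> multisets_of_size I (nat n). \<exists>U\<in>Gen. U \<subseteq># Y})
        = (\<Sum>t\<in>T. (of_nat (f t n) :: rat))" by (simp only: claim1 of_nat_sum)
    also have "\<dots> = (\<Sum>t\<in>T. poly (q t) (of_int n))" using q n by (intro sum.cong) auto
    also have "\<dots> = poly (\<Sum>t\<in>T. q t) (of_int n)" by (simp add: poly_sum)
    finally show "of_nat (if n < 0 then 0 else card {Y \<in> multisets_of_size I (nat n). \<exists>U\<in>Gen. U \<subseteq># Y})
        = poly (\<Sum>t\<in>T. q t) (of_int n)" .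
  qed
qed

lemma measure_unit_box: "measure lebesgue (box (x::real^'n) (x + 1)) = 1"
proof -
  have "measure lebesgue (box x (x + 1)) = measure lborel (box x (x + 1))"
    by (intro measure_completion) auto
  also have "\<dots> = 1" by (subst measure_lborel_box) (auto simp: Basis_vec_def inner_axis intro!: prod.neutral)
  finally show ?thesis .
qed

lemma ints_close_eq: "(a::real) \<in> \<int> \<Longrightarrow> b \<in> \<int> \<Longrightarrow> \<bar>a - b\<bar> < 1 \<Longrightarrow> a = b"
  by (elim Ints_cases) auto

lemma measure_boxes:
  assumes "finite X" "X \<subseteq> (int_points :: (real^'n) set)"
  shows "measure lebesgue (\<Union>x\<in>X. box x (x + 1)) = real (card X)"
proof -
  have "measure lebesgue (\<Union>x\<in>X. box x (x + 1)) = (\<Sum>x\<in>X. measure lebesgue (box x (x + 1)))"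
  proof (rule measure_UNION')
    show "pairwise (\<lambda>i j. disjnt (box i (i + 1)) (box j (j + 1))) X"
    proof (rule pairwiseI)
      fix x y assume xy: "x \<in> X" "y \<in> X" "x \<noteq> y"
      then obtain i where i: "x $ i \<noteq> y $ i" by (metis vec_eq_iff)
      have xi: "x $ i \<in> \<int>" and yi: "y $ i \<in> \<int>" using xy assms(2) by (auto simp: int_points_def)
      show "disjnt (box x (x + 1)) (box y (y + 1))"
      unfolding disjnt_iff
      proof (intro allI notI)
        fix z assume "z \<in> box x (x + 1) \<and> z \<in> box y (y + 1)"
        then have "x $ i < z $ i" "z $ i < x $ i + 1" "y $ i < z $ i" "z $ i < y $ i + 1"
          by (auto simp: mem_box_cart)
        then have "\<bar>x $ i - y $ i\<bar> < 1" by linarith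
        then show False using ints_close_eq[OF xi yi] i by blast
      qed
    qed
  qed (use assms in auto)
  also have "\<dots> = real (card X)" by (simp add: measure_unit_box)
  finally show ?thesis .
qed

lemma simplex_ball:
  fixes C :: "(real^'n) set"
  assumes ind: "\<not> affine_dependent C" and cC: "card C = CARD('n) + 1"
  shows "\<exists>q r. r > 0 \<and> ball q r \<subseteq> convex hull C"
proof -
  have fin: "finite C" using aff_independent_finite[OF ind] .
  have "C \<noteq> {}" using cC by auto
  have "of_nat (card C) = aff_dim C + 1" using aff_dim_affine_independent[OF ind] .
  then have "aff_dim (convex hull C) = int DIM(real^'n)" using cC by (simp add: aff_dim_convex_hull)
  then have ah: "affine hull (convex hull C) = UNIV" using aff_dim_eq_full by blast
  have "rel_interior (convex hull C) \<noteq> {}"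
    using rel_interior_eq_empty[of "convex hull C"] \<open>C \<noteq> {}\<close> by simp
  then have "interior (convex hull C) \<noteq> {}" using rel_interior_interior[OF ah] by simp
  then obtain q where q: "q \<in> interior (convex hull C)" by blast
  then obtain r where "r > 0" "ball q r \<subseteq> interior (convex hull C)"
    using open_contains_ball open_interior by blast
  then show ?thesis using interior_subset by blast
qed

lemma boxes_in_scaled:
  fixes D :: "(real^'n) set" and q :: "real^'n"
  assumes r: "r > 0" and bq: "ball q r \<subseteq> D" and cD: "convex D" and K: "K > 0"
    and X: "\<And>x. x \<in> X \<Longrightarrow> (1 / K) *\<^sub>R x \<in> D"
  defines "t \<equiv> real CARD('n) / r"
  shows "(\<Union>x\<in>X. box x (x + 1)) \<subseteq> (\<lambda>z. (K + t) *\<^sub>R z + (K *\<^sub>R q - (K + t) *\<^sub>R q)) ` D"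
proof safe
  fix x y assume x: "x \<in> X" and y: "y \<in> box x (x + 1)"
  define e where "e = y - x"
  have ei: "0 < e $ i \<and> e $ i < 1" for i
  proof -
    have "x $ i < y $ i \<and> y $ i < x $ i + 1" using y by (simp add: mem_box_cart)
    then show ?thesis by (simp add: e_def)
  qed
  have "norm e \<le> (\<Sum>i\<in>UNIV. \<bar>e $ i\<bar>)" by (rule norm_le_l1_cart)
  also have "\<dots> < (\<Sum>i\<in>(UNIV::'n set). 1)"
    by (rule sum_strict_mono) (use ei in \<open>auto simp: abs_less_iff\<close>, metis ei less_trans neg_less_0_iff_less zero_less_one)
  finally have ne: "norm e < real CARD('n)" by simp
  have t: "t > 0" using r by (simp add: t_def)
  have "q + (1 / t) *\<^sub>R e \<in> ball q r"
  proof -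
    have "norm ((1 / t) *\<^sub>R e) = norm e * r / real CARD('n)" using t r by (simp add: t_def)
    also have "\<dots> < r" using ne r by (simp add: divide_less_eq)
    finally show ?thesis by (simp add: dist_norm)
  qed
  then have p2: "q + (1 / t) *\<^sub>R e \<in> D" using bq by blast
  have p1: "(1 / K) *\<^sub>R x \<in> D" using X[OF x] .
  define w where "w = (K / (K + t)) *\<^sub>R ((1 / K) *\<^sub>R x) + (t / (K + t)) *\<^sub>R (q + (1 / t) *\<^sub>R e)"
  have wD: "w \<in> D" unfolding w_def
    by (rule convexD[OF cD p1 p2]) (use K t in \<open>auto simp: add_divide_distrib[symmetric]\<close>)
  have k1: "(K + t) * (K / (K + t)) = K" and k2: "(K + t) * (t / (K + t)) = t" using K t by auto
  have "(K + t) *\<^sub>R w = ((K + t) * (K / (K + t))) *\<^sub>R ((1 / K) *\<^sub>R x)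
      + ((K + t) * (t / (K + t))) *\<^sub>R (q + (1 / t) *\<^sub>R e)"
    by (simp add: w_def scaleR_add_right)
  also have "\<dots> = x + t *\<^sub>R q + e" unfolding k1 k2 using K t by (simp add: scaleR_add_right)
  finally have "(K + t) *\<^sub>R w + (K *\<^sub>R q - (K + t) *\<^sub>R q) = x + e"
    by (simp add: algebra_simps)
  also have "\<dots> = y" by (simp add: e_def)
  finally show "y \<in> (\<lambda>z. (K + t) *\<^sub>R z + (K *\<^sub>R q - (K + t) *\<^sub>R q)) ` D"
    using wD by (intro image_eqI[of _ _ w]) auto
qed

lemma ip_add: "x \<in> int_points \<Longrightarrow> y \<in> int_points \<Longrightarrow> x + y \<in> int_points"
  by (auto simp: int_points_def)

lemma ip_diff: "x \<in> int_points \<Longrightarrow> y \<in> int_points \<Longrightarrow> x - y \<in> int_points"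
  by (auto simp: int_points_def)

lemma ip_zero: "0 \<in> int_points"
  by (auto simp: int_points_def)

lemma ip_scale: "x \<in> int_points \<Longrightarrow> c \<in> \<int> \<Longrightarrow> c *\<^sub>R x \<in> int_points"
  by (auto simp: int_points_def)

lemma ip_sum: "(\<And>v. v \<in> S \<Longrightarrow> f v \<in> int_points) \<Longrightarrow> sum f S \<in> int_points"
  by (induction S rule: infinite_finite_induct) (auto intro: ip_add ip_zero)

lemma coords_unique:
  fixes C :: "'a::real_vector set"
  assumes fin: "finite C" and ind: "\<not> affine_dependent C"
    and s: "sum u C = sum u' C" and c: "(\<Sum>v\<in>C. u v *\<^sub>R v) = (\<Sum>v\<in>C. u' v *\<^sub>R v)"
    and v: "v \<in> C"
  shows "u v = u' v"
proof (rule ccontr)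
  assume ne: "u v \<noteq> u' v"
  have "affine_dependent C"
    unfolding affine_dependent_explicit_finite[OF fin]
  proof (intro exI[of _ "\<lambda>v. u v - u' v"] conjI)
    show "sum (\<lambda>v. u v - u' v) C = 0" using s by (simp add: sum_subtractf)
    show "\<exists>v\<in>C. u v - u' v \<noteq> 0" using ne v by auto
    show "(\<Sum>v\<in>C. (u v - u' v) *\<^sub>R v) = 0" using c by (simp add: scaleR_diff_left sum_subtractf)
  qed
  then show False using ind by blast
qed

lemma lattice_count_bound:
  fixes C :: "(real^'n) set" and G' :: "((real^'n) \<Rightarrow> real) set"
  assumes ind: "\<not> affine_dependent C" and cC: "card C = CARD('n) + 1" and CZ: "C \<subseteq> int_points"
    and finG: "finite G'"
    and G01: "\<And>g v. g \<in> G' \<Longrightarrow> 0 \<le> g v \<and> g v < 1"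
    and G0: "\<And>g v. g \<in> G' \<Longrightarrow> v \<notin> C \<Longrightarrow> g v = 0"
    and GZ: "\<And>g. g \<in> G' \<Longrightarrow> sum g C \<in> \<int>"
    and GP: "\<And>g. g \<in> G' \<Longrightarrow> (\<Sum>v\<in>C. g v *\<^sub>R v) \<in> int_points"
  shows "real (card G') \<le> fact CARD('n) * measure lebesgue (convex hull C)"
proof -
  define d where "d = CARD('n)"
  define D where "D = convex hull C"
  define vol where "vol = measure lebesgue D"
  have fin: "finite C" using aff_independent_finite[OF ind] .
  have Cne: "C \<noteq> {}" using cC by auto
  obtain q r where r: "r > 0" and bq: "ball q r \<subseteq> D"
    using simplex_ball[OF ind cC] unfolding D_def by blast
  define t where "t = real CARD('n) / r"
  have t: "t > 0" using r by (simp add: t_def)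
  have d1: "d \<ge> 1" by (simp add: d_def Suc_le_eq)
  define lev where "lev g = nat \<lfloor>sum g C\<rfloor>" for g :: "real^'n \<Rightarrow> real"
  have lev: "real (lev g) = sum g C" if "g \<in> G'" for g
  proof -
    have "sum g C \<ge> 0" using G01[OF that] by (simp add: sum_nonneg)
    then show ?thesis using GZ[OF that] by (simp add: lev_def)
  qed
  have levd: "lev g \<le> d" if "g \<in> G'" for g
  proof -
    have "sum g C < (\<Sum>v\<in>C. 1)" using fin Cne G01[OF that] by (intro sum_strict_mono) auto
    then have "real (lev g) < real d + 1" using lev[OF that] cC by (simp add: d_def)
    then show ?thesis by simp
  qed
  have claim: "real (card G') * real (K choose d) \<le> (real K + t) ^ d * vol" if K: "K \<ge> d" for K :: nat
  proof -
    define \<Phi> where "\<Phi> p = (\<Sum>v\<in>C. (fst p v + real (count (snd p) v)) *\<^sub>R v)" for p :: "(real^'n \<Rightarrow> real) \<times> (real^'n) multiset"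
    define SG where "SG = Sigma G' (\<lambda>g. multisets_of_size C (K - lev g))"
    have finSG: "finite SG" unfolding SG_def using finG fin by (auto intro: finite_multisets_of_size)
    have sumK: "sum (\<lambda>v. fst p v + real (count (snd p) v)) C = real K" if "p \<in> SG" for p
    proof -
      obtain g Y where p: "p = (g, Y)" "g \<in> G'" "Y \<in> multisets_of_size C (K - lev g)"
        using \<open>p \<in> SG\<close> unfolding SG_def by auto
      have "size Y = (\<Sum>v\<in>C. count Y v)" using p(3) size_as_sum[OF fin] by (auto simp: multisets_of_size_def)
      then have "real (size Y) = (\<Sum>v\<in>C. real (count Y v))" by simp
      moreover have "size Y = K - lev g" using p(3) by (simp add: multisets_of_size_def)
      moreover have "lev g \<le> K" using levd[OF p(2)] K by simp
      ultimately show ?thesis using p lev[OF p(2)] by (simp add: sum.distrib)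
    qed
    have inj: "inj_on \<Phi> SG"
    proof (rule inj_onI)
      fix p p' assume pp: "p \<in> SG" "p' \<in> SG" "\<Phi> p = \<Phi> p'"
      obtain g Y where p: "p = (g, Y)" "g \<in> G'" "Y \<in> multisets_of_size C (K - lev g)"
        using \<open>p \<in> SG\<close> unfolding SG_def by auto
      obtain g' Y' where p': "p' = (g', Y')" "g' \<in> G'" "Y' \<in> multisets_of_size C (K - lev g')"
        using \<open>p' \<in> SG\<close> unfolding SG_def by auto
      have eqv: "g v + real (count Y v) = g' v + real (count Y' v)" if "v \<in> C" for v
        using coords_unique[OF fin ind _ _ that, of "\<lambda>v. g v + real (count Y v)" "\<lambda>v. g' v + real (count Y' v)"]
          sumK[OF pp(1)] sumK[OF pp(2)] pp(3) p p' by (simp add: \<Phi>_def)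
      have geq: "g v = g' v" for v
      proof (cases "v \<in> C")
        case True
        have "g v - g' v \<in> \<int>" using eqv[OF True]
          by (metis (no_types, opaque_lifting) Ints_diff Ints_of_nat add_diff_cancel_left' diff_add_eq_diff_diff_swap diff_diff_eq2)
        moreover have "\<bar>(g v - g' v) - 0\<bar> < 1" using G01[OF p(2), of v] G01[OF p'(2), of v] by auto
        ultimately show ?thesis using ints_close_eq[of "g v - g' v" 0] by auto
      next
        case False then show ?thesis by (simp add: G0[OF p(2) False] G0[OF p'(2) False])
      qed
      have "count Y v = count Y' v" for v
      proof (cases "v \<in> C")
        case True then show ?thesis using eqv[OF True] geq[of v] by simp
      next
        case False
        then have "v \<notin># Y" "v \<notin># Y'" using p(3) p'(3) by (auto simp: multisets_of_size_def)
        then show ?thesis by (simp add: not_in_iff)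
      qed
      then show "p = p'" using p p' geq by (auto intro: multiset_eqI)
    qed
    define X where "X = \<Phi> ` SG"
    have finX: "finite X" using finSG by (simp add: X_def)
    have XZ: "X \<subseteq> int_points"
    proof
      fix x assume "x \<in> X"
      then obtain g Y where x: "x = \<Phi> (g, Y)" "g \<in> G'" by (auto simp: X_def SG_def)
      have "x = (\<Sum>v\<in>C. g v *\<^sub>R v) + (\<Sum>v\<in>C. real (count Y v) *\<^sub>R v)"
        by (simp add: x \<Phi>_def scaleR_add_left sum.distrib)
      moreover have "(\<Sum>v\<in>C. real (count Y v) *\<^sub>R v) \<in> int_points"
        using CZ by (intro ip_sum ip_scale) auto
      ultimately show "x \<in> int_points" using GP[OF x(2)] by (simp add: ip_add)
    qed
    have XD: "(1 / real K) *\<^sub>R x \<in> D" if "x \<in> X" for x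
    proof -
      obtain p where p: "p \<in> SG" "x = \<Phi> p" using \<open>x \<in> X\<close> by (auto simp: X_def)
      obtain g Y where gY: "p = (g, Y)" "g \<in> G'" using p(1) by (auto simp: SG_def)
      have K0: "real K > 0" using K d1 by simp
      define u where "u v = (g v + real (count Y v)) / real K" for v
      have "(1 / real K) *\<^sub>R x = (\<Sum>v\<in>C. u v *\<^sub>R v)"
        by (simp add: p gY \<Phi>_def u_def scaleR_sum_right divide_inverse_commute)
      moreover have "sum u C = 1" using sumK[OF p(1)] K0 by (simp add: u_def gY sum_divide_distrib[symmetric])
      moreover have "\<forall>v\<in>C. 0 \<le> u v" using G01[OF gY(2)] K0 by (simp add: u_def)
      ultimately show ?thesis unfolding D_def convex_hull_finite[OF fin]
        by (intro CollectI exI[of _ u]) simp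
    qed
    have "real (card G') * real (K choose d) = (\<Sum>g\<in>G'. real (K choose d))" by simp
    also have "\<dots> \<le> (\<Sum>g\<in>G'. real (card (multisets_of_size C (K - lev g))))"
    proof (intro sum_mono)
      fix g assume g: "g \<in> G'"
      have "card (multisets_of_size C (K - lev g)) = (d + (K - lev g)) choose d"
        using card_multisets_of_size[OF fin] cC binomial_symmetric[of d "d + (K - lev g)"]
        by (simp add: d_def)
      moreover have "K choose d \<le> (d + (K - lev g)) choose d"
        using levd[OF g] by (intro binomial_right_mono) simp
      ultimately show "real (K choose d) \<le> real (card (multisets_of_size C (K - lev g)))" by simp
    qed
    also have "\<dots> = real (card SG)" unfolding SG_def using finG fin
      by (subst card_SigmaI) (auto simp: finite_multisets_of_size)
    also have "\<dots> = real (card X)" using card_image[OF inj] by (simp add: X_def)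
    also have "\<dots> = measure lebesgue (\<Union>x\<in>X. box x (x + 1))" using measure_boxes[OF finX XZ] by simp
    also have "\<dots> \<le> measure lebesgue ((\<lambda>z. (real K + t) *\<^sub>R z + (real K *\<^sub>R q - (real K + t) *\<^sub>R q)) ` D)"
    proof (rule measure_mono_fmeasurable)
      show "(\<Union>x\<in>X. box x (x + 1)) \<subseteq> (\<lambda>z. (real K + t) *\<^sub>R z + (real K *\<^sub>R q - (real K + t) *\<^sub>R q)) ` D"
      proof -
        have cD: "convex D" by (simp add: D_def convex_convex_hull)
        have K0: "real K > 0" using K d1 by simp
        show ?thesis using boxes_in_scaled[OF r bq cD K0 XD] unfolding t_def by simp
      qed
      show "(\<Union>x\<in>X. box x (x + 1)) \<in> sets lebesgue" using finX
        by (intro sets.finite_UN) (auto intro: fmeasurableD)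
      have "compact D" unfolding D_def using fin by (simp add: finite_imp_compact_convex_hull)
      then have "compact ((\<lambda>z. (real K + t) *\<^sub>R z + (real K *\<^sub>R q - (real K + t) *\<^sub>R q)) ` D)"
        by (intro compact_continuous_image continuous_intros)
      then show "(\<lambda>z. (real K + t) *\<^sub>R z + (real K *\<^sub>R q - (real K + t) *\<^sub>R q)) ` D \<in> lmeasurable"
        by (rule lmeasurable_compact)
    qed
    also have "\<dots> = (real K + t) ^ d * vol"
      using t by (simp add: measure_lebesgue_affine vol_def d_def)
    finally show ?thesis .
  qed
  have claim2: "real (card G') \<le> fact d * vol * ((real K + t) / (real K - real d)) ^ d" if K: "K > d" for K :: nat
  proof -
    have Kd: "real K - real d > 0" using K by simp
    have "real (K - d) ^ d \<le> (\<Prod>j\<in>{1..d}. real (K - d) + real j)"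
      using prod_mono[of "{1..d}" "\<lambda>j. real (K - d)" "\<lambda>j. real (K - d) + real j"] by simp
    also have "\<dots> = real ((K - d + d) choose d) * fact d" using binom_prod[of "K - d" d, where 'a=real] by simp
    also have "K - d + d = K" using K by simp
    finally have b: "(real K - real d) ^ d \<le> real (K choose d) * fact d" using K by (simp add: of_nat_diff)
    have "real (card G') * (real K - real d) ^ d \<le> real (card G') * (real (K choose d) * fact d)"
      by (intro mult_left_mono b) simp
    also have "\<dots> \<le> (real K + t) ^ d * vol * fact d"
      using claim[of K] K by (simp add: mult.assoc[symmetric])
    finally have "real (card G') * (real K - real d) ^ d \<le> fact d * vol * (real K + t) ^ d"
      by (simp add: algebra_simps)
    then show ?thesis using Kd by (simp add: power_divide field_simps)
  qed
  have lim: "(\<lambda>K. fact d * vol * ((real K + t) / (real K - real d)) ^ d) \<longlonglongrightarrow> fact d * vol * 1 ^ d"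
    by (intro tendsto_intros) real_asymp
  have "real (card G') \<le> fact d * vol * 1 ^ d"
    by (rule LIMSEQ_le_const[OF lim]) (use claim2 in \<open>auto intro: exI[of _ "Suc d"]\<close>)
  then show ?thesis by (simp add: d_def vol_def D_def)
qed

lemma sumset_lists: "sumset h (A::'a::comm_monoid_add set) = {sum_list xs | xs. length xs = h \<and> set xs \<subseteq> A}"
proof (induction h)
  case 0 then show ?case by simp
next
  case (Suc h)
  show ?case
  proof (rule set_eqI, rule iffI)
    fix z assume "z \<in> sumset (Suc h) A"
    then obtain x y where "z = x + y" "x \<in> sumset h A" "y \<in> A" by (simp only: sumset.simps) blast
    then obtain xs where "x = sum_list xs" "length xs = h" "set xs \<subseteq> A" using Suc by blast
    then have "z = sum_list (y # xs)" "length (y # xs) = Suc h" "set (y # xs) \<subseteq> A"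
      using \<open>z = x + y\<close> \<open>y \<in> A\<close> by (auto simp: add.commute)
    then show "z \<in> {sum_list xs | xs. length xs = Suc h \<and> set xs \<subseteq> A}" by blast
  next
    fix z assume "z \<in> {sum_list xs | xs. length xs = Suc h \<and> set xs \<subseteq> A}"
    then obtain xs where xs: "z = sum_list xs" "length xs = Suc h" "set xs \<subseteq> A" by blast
    then obtain y ys where "xs = y # ys" by (cases xs) auto
    then have "sum_list ys \<in> sumset h A" "y \<in> A" "z = sum_list ys + y"
      using xs Suc by (auto simp: add.commute)
    then show "z \<in> sumset (Suc h) A" by (simp only: sumset.simps) blast
  qed
qed

locale splx =
  fixes A :: "(real^'n) set" and C :: "(real^'n) set"
  assumes finA: "finite A" and AZ: "A \<subseteq> int_points" and ind: "\<not> affine_dependent C"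
    and cC: "card C = CARD('n) + 1" and hullAC: "convex hull A = convex hull C" and CA: "C \<subseteq> A"
begin

lemma finC: "finite C" using aff_independent_finite[OF ind] .

definition lam :: "real^'n \<Rightarrow> real^'n \<Rightarrow> real" where
  "lam a = (SOME u. (\<forall>v\<in>C. 0 \<le> u v) \<and> sum u C = 1 \<and> (\<Sum>v\<in>C. u v *\<^sub>R v) = a \<and> (\<forall>v. v \<notin> C \<longrightarrow> u v = 0))"

lemma lam:
  assumes "a \<in> A"
  shows "(\<forall>v\<in>C. 0 \<le> lam a v) \<and> sum (lam a) C = 1 \<and> (\<Sum>v\<in>C. lam a v *\<^sub>R v) = a \<and> (\<forall>v. v \<notin> C \<longrightarrow> lam a v = 0)"
proof -
  have "a \<in> convex hull A" using assms hull_subset[of A convex] by blast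
  then have "a \<in> convex hull C" using hullAC by simp
  then have "\<exists>u. (\<forall>x\<in>C. 0 \<le> u x) \<and> sum u C = 1 \<and> (\<Sum>v\<in>C. u v *\<^sub>R v) = a"
    unfolding convex_hull_finite[OF finC] by (rule CollectD)
  then obtain u :: "real^'n \<Rightarrow> real" where u: "\<forall>v\<in>C. 0 \<le> u v" "sum u C = 1" "(\<Sum>v\<in>C. u v *\<^sub>R v) = a"
    by blast
  define u' where "u' v = (if v \<in> C then u v else 0)" for v
  have s1: "sum u' C = sum u C" by (rule sum.cong) (auto simp: u'_def)
  have s2: "(\<Sum>v\<in>C. u' v *\<^sub>R v) = (\<Sum>v\<in>C. u v *\<^sub>R v)" by (rule sum.cong) (auto simp: u'_def)
  have "(\<forall>v\<in>C. 0 \<le> u' v) \<and> sum u' C = 1 \<and> (\<Sum>v\<in>C. u' v *\<^sub>R v) = a \<and> (\<forall>v. v \<notin> C \<longrightarrow> u' v = 0)"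
    using u s1 s2 by (simp add: u'_def)
  then have "\<exists>u. (\<forall>v\<in>C. 0 \<le> u v) \<and> sum u C = 1 \<and> (\<Sum>v\<in>C. u v *\<^sub>R v) = a \<and> (\<forall>v. v \<notin> C \<longrightarrow> u v = 0)"
    by (intro exI[of _ u'])
  then show ?thesis unfolding lam_def by (rule someI_ex)
qed

lemma lam_nonneg: "a \<in> A \<Longrightarrow> 0 \<le> lam a v"
  using lam[of a] by (cases "v \<in> C") auto

lemma lam_out: "a \<in> A \<Longrightarrow> v \<notin> C \<Longrightarrow> lam a v = 0"
  using lam[of a] by auto

lemma lam_vertex:
  assumes "w \<in> C"
  shows "lam w = (\<lambda>v. if v = w then 1 else 0)"
proof
  fix v
  have wA: "w \<in> A" using assms CA by auto
  show "lam w v = (if v = w then 1 else 0)"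
  proof (cases "v \<in> C")
    case True
    show ?thesis
    proof (rule coords_unique[OF finC ind _ _ True])
      show "sum (lam w) C = (\<Sum>v\<in>C. if v = w then 1 else 0)" using lam[OF wA] assms finC by simp
      show "(\<Sum>v\<in>C. lam w v *\<^sub>R v) = (\<Sum>v\<in>C. (if v = w then 1 else 0) *\<^sub>R v)"
      proof -
        have "(\<Sum>v\<in>C. (if v = w then 1 else 0) *\<^sub>R v) = (\<Sum>v\<in>C. if v = w then v else 0)"
          by (rule sum.cong) auto
        then show ?thesis using lam[OF wA] assms finC by simp
      qed
    qed
  next
    case False
    then show ?thesis using lam_out[OF wA False] assms by auto
  qed
qed

definition mu :: "(real^'n) list \<Rightarrow> real^'n \<Rightarrow> real" where
  "mu xs v = (\<Sum>a\<leftarrow>xs. lam a v)"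

lemma mu_Nil [simp]: "mu [] v = 0" by (simp add: mu_def)
lemma mu_Cons [simp]: "mu (a # xs) v = lam a v + mu xs v" by (simp add: mu_def)
lemma mu_append: "mu (xs @ ys) v = mu xs v + mu ys v" by (simp add: mu_def)

lemma mu_nonneg: "set xs \<subseteq> A \<Longrightarrow> 0 \<le> mu xs v"
  by (induction xs) (auto intro: lam_nonneg add_nonneg_nonneg)

lemma mu_out: "set xs \<subseteq> A \<Longrightarrow> v \<notin> C \<Longrightarrow> mu xs v = 0"
  by (induction xs) (auto simp: lam_out)

lemma mu_sum: "set xs \<subseteq> A \<Longrightarrow> sum (mu xs) C = real (length xs)"
proof (induction xs)
  case Nil then show ?case by simp
next
  case (Cons a xs)
  then have "sum (mu (a # xs)) C = sum (lam a) C + sum (mu xs) C" by (simp add: sum.distrib)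
  then show ?case using Cons lam[of a] by simp
qed

lemma mu_comb: "set xs \<subseteq> A \<Longrightarrow> (\<Sum>v\<in>C. mu xs v *\<^sub>R v) = sum_list xs"
proof (induction xs)
  case Nil then show ?case by simp
next
  case (Cons a xs)
  then have "(\<Sum>v\<in>C. mu (a # xs) v *\<^sub>R v) = (\<Sum>v\<in>C. lam a v *\<^sub>R v) + (\<Sum>v\<in>C. mu xs v *\<^sub>R v)"
    by (simp add: sum.distrib scaleR_add_left)
  then show ?case using Cons lam[of a] by simp
qed

lemma mu_vertices: "set xs \<subseteq> C \<Longrightarrow> mu xs v = real (count (mset xs) v)"
  by (induction xs) (auto simp: lam_vertex)

definition CS :: "(real^'n \<Rightarrow> real) set" where
  "CS = {mu xs | xs. set xs \<subseteq> A}"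

lemma card_sumset: "card (sumset h A) = card {\<mu>\<in>CS. sum \<mu> C = real h}"
proof -
  define F where "F \<mu> = (\<Sum>v\<in>C. \<mu> v *\<^sub>R v)" for \<mu> :: "real^'n \<Rightarrow> real"
  have img: "F ` {\<mu>\<in>CS. sum \<mu> C = real h} = sumset h A"
  proof (rule set_eqI, rule iffI)
    fix x assume "x \<in> F ` {\<mu>\<in>CS. sum \<mu> C = real h}"
    then obtain xs where xs: "set xs \<subseteq> A" "sum (mu xs) C = real h" "x = F (mu xs)"
      by (auto simp: CS_def)
    then have "length xs = h" using mu_sum[OF xs(1)] by simp
    then show "x \<in> sumset h A" using xs mu_comb[OF xs(1)] by (auto simp: sumset_lists F_def)
  next
    fix x assume "x \<in> sumset h A"
    then obtain xs where xs: "x = sum_list xs" "length xs = h" "set xs \<subseteq> A" by (auto simp: sumset_lists)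
    then have "mu xs \<in> {\<mu>\<in>CS. sum \<mu> C = real h}" using mu_sum[OF xs(3)] by (auto simp: CS_def)
    moreover have "x = F (mu xs)" using mu_comb[OF xs(3)] xs by (simp add: F_def)
    ultimately show "x \<in> F ` {\<mu>\<in>CS. sum \<mu> C = real h}" by blast
  qed
  have inj: "inj_on F {\<mu>\<in>CS. sum \<mu> C = real h}"
  proof (rule inj_onI)
    fix \<mu> \<mu>' assume a: "\<mu> \<in> {\<mu>\<in>CS. sum \<mu> C = real h}" "\<mu>' \<in> {\<mu>\<in>CS. sum \<mu> C = real h}" "F \<mu> = F \<mu>'"
    obtain xs where xs: "\<mu> = mu xs" "set xs \<subseteq> A" using a(1) by (auto simp: CS_def)
    obtain ys where ys: "\<mu>' = mu ys" "set ys \<subseteq> A" using a(2) by (auto simp: CS_def)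
    show "\<mu> = \<mu>'"
    proof
      fix v show "\<mu> v = \<mu>' v"
      proof (cases "v \<in> C")
        case True
        show ?thesis by (rule coords_unique[OF finC ind _ _ True]) (use a in \<open>auto simp: F_def\<close>)
      next
        case False then show ?thesis using xs ys mu_out by simp
      qed
    qed
  qed
  show ?thesis using card_image[OF inj] img by simp
qed

end

lemma ip_sum_list: "set xs \<subseteq> int_points \<Longrightarrow> sum_list xs \<in> int_points"
  by (induction xs) (auto intro: ip_add ip_zero)

lemma frac_eq_diff_int: "frac a = frac b \<Longrightarrow> a - b \<in> \<int>"
proof -
  assume "frac a = frac b"
  then have "a - b = of_int (\<lfloor>a\<rfloor> - \<lfloor>b\<rfloor>)" by (simp add: frac_def)
  then show ?thesis by simp
qed

context splx
begin

definition fr :: "(real^'n \<Rightarrow> real) \<Rightarrow> real^'n \<Rightarrow> real" where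
  "fr \<mu> = (\<lambda>v. frac (\<mu> v))"

definition G :: "(real^'n \<Rightarrow> real) set" where
  "G = fr ` CS"

lemma G_props:
  assumes "g \<in> G"
  shows "\<And>v. 0 \<le> g v \<and> g v < 1" and "\<And>v. v \<notin> C \<Longrightarrow> g v = 0"
    and "sum g C \<in> \<int>" and "(\<Sum>v\<in>C. g v *\<^sub>R v) \<in> int_points"
proof -
  obtain xs where xs: "set xs \<subseteq> A" "g = fr (mu xs)" using assms by (auto simp: G_def CS_def)
  show "0 \<le> g v \<and> g v < 1" for v by (simp add: xs fr_def frac_lt_1)
  show "v \<notin> C \<Longrightarrow> g v = 0" for v by (simp add: xs fr_def mu_out)
  have gv: "g v = mu xs v - of_int \<lfloor>mu xs v\<rfloor>" for v by (simp add: xs fr_def frac_def)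
  have "sum g C = real (length xs) - (\<Sum>v\<in>C. of_int \<lfloor>mu xs v\<rfloor>)"
    by (simp add: gv sum_subtractf mu_sum[OF xs(1)])
  then show "sum g C \<in> \<int>" by (auto intro!: Ints_diff Ints_sum)
  have "(\<Sum>v\<in>C. g v *\<^sub>R v) = sum_list xs - (\<Sum>v\<in>C. of_int \<lfloor>mu xs v\<rfloor> *\<^sub>R v)"
    by (simp add: gv scaleR_diff_left sum_subtractf mu_comb[OF xs(1)])
  moreover have "sum_list xs \<in> int_points" using xs(1) AZ by (intro ip_sum_list) auto
  moreover have "(\<Sum>v\<in>C. of_int \<lfloor>mu xs v\<rfloor> *\<^sub>R v) \<in> int_points"
    using CA AZ by (intro ip_sum ip_scale) auto
  ultimately show "(\<Sum>v\<in>C. g v *\<^sub>R v) \<in> int_points" by (simp add: ip_diff)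
qed

lemma zero_in_CS: "(\<lambda>v. 0) \<in> CS"
proof -
  have "(\<lambda>v. 0) = mu [] \<and> set [] \<subseteq> A" by (auto intro: ext)
  then show ?thesis unfolding CS_def by (intro CollectI exI[of _ "[]"])
qed

lemma zero_in_G: "(\<lambda>v. 0) \<in> G"
proof -
  have "fr (\<lambda>v. 0) = (\<lambda>v. 0)" by (simp add: fr_def)
  then show ?thesis using zero_in_CS unfolding G_def by (metis image_eqI)
qed

lemma G_subset_bound:
  assumes "finite G'" "G' \<subseteq> G"
  shows "real (card G') \<le> fact CARD('n) * measure lebesgue (convex hull C)"
  by (rule lattice_count_bound[OF ind cC _ assms(1)]) (use CA AZ G_props assms(2) in auto)

lemma finite_G: "finite G"
proof (rule ccontr)
  assume "infinite G"
  obtain n :: nat where n: "real n > fact CARD('n) * measure lebesgue (convex hull C)"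
    using reals_Archimedean2 by blast
  obtain G' where "finite G'" "card G' = n" "G' \<subseteq> G"
    using infinite_arbitrarily_large[OF \<open>infinite G\<close>] by blast
  then show False using G_subset_bound n by force
qed

lemma card_G_bound: "real (card G) \<le> fact CARD('n) * measure lebesgue (convex hull C)"
  using G_subset_bound[OF finite_G] by simp

lemma card_G_pos: "card G \<ge> 1"
  using zero_in_G finite_G by (metis One_nat_def Suc_leI card_gt_0_iff empty_iff)

lemma fr_mu_G: "set xs \<subseteq> A \<Longrightarrow> fr (mu xs) \<in> G"
  unfolding G_def CS_def by blast

lemma step:
  assumes xs: "set xs \<subseteq> A" and len: "length xs \<ge> card G"
  shows "\<exists>ys zs. set ys \<subseteq> A \<and> length ys < length xs \<and> (\<forall>v. mu xs v = mu ys v + mu zs v)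
           \<and> (\<forall>v. mu zs v \<in> \<int>) \<and> set zs \<subseteq> A"
proof -
  define f where "f i = fr (mu (take i xs))" for i
  have sub: "f ` {0..length xs} \<subseteq> G"
  proof
    fix g assume "g \<in> f ` {0..length xs}"
    then obtain i where "g = f i" by blast
    moreover have "set (take i xs) \<subseteq> A" using xs by (meson order_trans set_take_subset)
    ultimately show "g \<in> G" by (simp add: f_def fr_mu_G)
  qed
  have "card (f ` {0..length xs}) \<le> card G" using sub finite_G by (rule card_mono[rotated])
  also have "\<dots> < card {0..length xs}" using len by simp
  finally have "\<not> inj_on f {0..length xs}" by (rule pigeonhole)
  then obtain i j where ij: "i \<in> {0..length xs}" "j \<in> {0..length xs}" "i \<noteq> j" "f i = f j"
    unfolding inj_on_def by blast
  obtain a b where ab: "a < b" "b \<le> length xs" "f a = f b"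
  proof (cases "i < j")
    case True then show ?thesis using ij that[of i j] by auto
  next
    case False then show ?thesis using ij that[of j i] by auto
  qed
  define ys where "ys = take a xs @ drop b xs"
  define zs where "zs = drop a (take b xs)"
  have tb: "take b xs = take a xs @ zs" using ab by (simp add: zs_def take_add[symmetric]) (metis append_take_drop_id min.absorb1 less_imp_le take_take)
  have xsplit: "xs = take a xs @ zs @ drop b xs"
    using tb by (metis append.assoc append_take_drop_id)
  have "set ys \<subseteq> A" using xs by (auto simp: ys_def dest: in_set_takeD in_set_dropD)
  moreover have "set zs \<subseteq> A" using xs by (auto simp: zs_def dest: in_set_takeD in_set_dropD)
  moreover have "length ys < length xs" using ab by (simp add: ys_def)
  moreover have "mu xs v = mu ys v + mu zs v" for v
    using xsplit by (metis add.commute add.left_commute mu_append ys_def)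
  moreover have "mu zs v \<in> \<int>" for v
  proof -
    have "fr (mu (take b xs)) v = fr (mu (take a xs)) v" using ab(3) by (simp add: f_def)
    then have "mu (take b xs) v - mu (take a xs) v \<in> \<int>" by (simp add: fr_def frac_eq_diff_int)
    then show ?thesis using tb by (simp add: mu_append)
  qed
  ultimately show ?thesis by blast
qed

lemma gen_exists:
  assumes "set xs \<subseteq> A"
  shows "\<exists>ys. set ys \<subseteq> A \<and> length ys < card G \<and> (\<forall>v. mu ys v \<le> mu xs v \<and> mu xs v - mu ys v \<in> \<int>)"
  using assms
proof (induction "length xs" arbitrary: xs rule: less_induct)
  case less
  show ?case
  proof (cases "length xs < card G")
    case True then show ?thesis using less.prems by (intro exI[of _ xs]) auto
  next
    case False
    then obtain ys zs where yz: "set ys \<subseteq> A" "length ys < length xs" "\<forall>v. mu xs v = mu ys v + mu zs v"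
      "\<forall>v. mu zs v \<in> \<int>" "set zs \<subseteq> A"
      using step[OF less.prems] by auto
    obtain ws where ws: "set ws \<subseteq> A" "length ws < card G" "\<forall>v. mu ws v \<le> mu ys v \<and> mu ys v - mu ws v \<in> \<int>"
      using less.hyps[OF yz(2) yz(1)] by blast
    have "mu ws v \<le> mu xs v \<and> mu xs v - mu ws v \<in> \<int>" for v
    proof
      show "mu ws v \<le> mu xs v" using ws(3) yz(3) mu_nonneg[OF yz(5), of v] by (metis add_increasing2)
      have "mu xs v - mu ws v = (mu ys v - mu ws v) + mu zs v" using yz(3) by simp
      then show "mu xs v - mu ws v \<in> \<int>" using ws(3) yz(4) by (metis Ints_add)
    qed
    then show ?thesis using ws by blast
  qed
qed

end

context splx
begin

definition flo :: "(real^'n \<Rightarrow> real) \<Rightarrow> (real^'n) multiset" where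
  "flo \<mu> = (\<Sum>v\<in>C. replicate_mset (nat \<lfloor>\<mu> v\<rfloor>) v)"

lemma count_flo: "count (flo \<mu>) v = (if v \<in> C then nat \<lfloor>\<mu> v\<rfloor> else 0)"
proof -
  have "count (flo \<mu>) v = (\<Sum>w\<in>C. if v = w then nat \<lfloor>\<mu> w\<rfloor> else 0)"
    by (simp add: flo_def count_sum)
  also have "\<dots> = (if v \<in> C then nat \<lfloor>\<mu> v\<rfloor> else 0)" using finC by simp
  finally show ?thesis .
qed

lemma set_flo: "set_mset (flo \<mu>) \<subseteq> C"
proof
  fix v assume "v \<in># flo \<mu>"
  then have "count (flo \<mu>) v > 0" by simp
  then show "v \<in> C" by (simp add: count_flo split: if_splits)
qed

definition CSg :: "(real^'n \<Rightarrow> real) \<Rightarrow> (real^'n) multiset set" where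
  "CSg g = {Y. set_mset Y \<subseteq> C \<and> (\<lambda>v. g v + real (count Y v)) \<in> CS}"

lemma mu_mset: "set zs \<subseteq> C \<Longrightarrow> mu zs = (\<lambda>v. real (count (mset zs) v))"
  by (rule ext) (rule mu_vertices)

lemma up_closed:
  assumes Y: "Y \<in> CSg g" and sub: "Y \<subseteq># Y'" and Y'C: "set_mset Y' \<subseteq> C"
  shows "Y' \<in> CSg g"
proof -
  have "(\<lambda>v. g v + real (count Y v)) \<in> CS" using Y by (simp add: CSg_def)
  then obtain xs where xs: "set xs \<subseteq> A" "(\<lambda>v. g v + real (count Y v)) = mu xs"
    unfolding CS_def by blast
  obtain zs where zs: "mset zs = Y' - Y" using ex_mset by blast
  have "set_mset (Y' - Y) \<subseteq> set_mset Y'" by (auto dest: in_diffD)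
  then have zC: "set zs \<subseteq> C" using Y'C zs by (metis set_mset_mset order_trans)
  have cnt: "count Y' v = count Y v + count (Y' - Y) v" for v
  proof -
    have "count Y v \<le> count Y' v" using sub by (rule mset_subset_eq_count)
    then show ?thesis by simp
  qed
  have mxz: "mu (xs @ zs) = (\<lambda>v. g v + real (count Y' v))"
  proof
    fix v
    have "mu (xs @ zs) v = mu xs v + mu zs v" by (rule mu_append)
    also have "mu xs v = g v + real (count Y v)" using fun_cong[OF xs(2), of v] by simp
    also have "mu zs v = real (count (Y' - Y) v)" using mu_vertices[OF zC, of v] zs by simp
    finally have "mu (xs @ zs) v = g v + real (count Y v) + real (count (Y' - Y) v)" .
    moreover have "real (count Y' v) = real (count Y v) + real (count (Y' - Y) v)"
      by (simp only: cnt[of v] of_nat_add)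
    ultimately show "mu (xs @ zs) v = g v + real (count Y' v)" by linarith
  qed
  have "set (xs @ zs) \<subseteq> A" using xs(1) zC CA by auto
  then have "(\<lambda>v. g v + real (count Y' v)) \<in> CS" unfolding CS_def using mxz
    by (intro CollectI exI[of _ "xs @ zs"]) simp
  then show ?thesis using Y'C by (simp add: CSg_def)
qed

definition Gen :: "(real^'n \<Rightarrow> real) \<Rightarrow> (real^'n) multiset set" where
  "Gen g = (if g = (\<lambda>v. 0) then {{#}} else {U \<in> CSg g. sum g C + real (size U) < real (card G)})"

definition lev :: "(real^'n \<Rightarrow> real) \<Rightarrow> nat" where
  "lev g = nat \<lfloor>sum g C\<rfloor>"

lemma lev: "g \<in> G \<Longrightarrow> real (lev g) = sum g C"
proof -
  assume g: "g \<in> G"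
  have "sum g C \<ge> 0" using G_props(1)[OF g] by (simp add: sum_nonneg)
  then show ?thesis using G_props(3)[OF g] by (simp add: lev_def)
qed

lemma lev_pos:
  assumes g: "g \<in> G" and ne: "g \<noteq> (\<lambda>v. 0)"
  shows "lev g \<ge> 1"
proof -
  obtain w where w: "g w \<noteq> 0" using ne by auto
  then have wC: "w \<in> C" using G_props(2)[OF g] by auto
  have "g w > 0" using G_props(1)[OF g, of w] w by simp
  also have "g w \<le> sum g C" using finC wC G_props(1)[OF g] by (intro member_le_sum) auto
  finally have "real (lev g) > 0" using lev[OF g] by simp
  then show ?thesis by simp
qed

lemma floor_small0: "0 \<le> x \<Longrightarrow> x < 1 \<Longrightarrow> \<lfloor>x + real n\<rfloor> = int n"
  by (subst floor_eq_iff) simp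

lemma frac_small: "0 \<le> x \<Longrightarrow> x < 1 \<Longrightarrow> frac (x + real n) = x"
  using floor_small0[of x n] by (simp add: frac_def)

lemma floor_small: "0 \<le> x \<Longrightarrow> x < 1 \<Longrightarrow> nat \<lfloor>x + real n\<rfloor> = n"
  by (subst floor_small0) auto

lemma decomp:
  assumes "\<mu> \<in> CS" "fr \<mu> = g"
  shows "\<mu> = (\<lambda>v. g v + real (count (flo \<mu>) v))"
proof
  fix v
  obtain xs where xs: "set xs \<subseteq> A" "\<mu> = mu xs" using assms(1) by (auto simp: CS_def)
  show "\<mu> v = g v + real (count (flo \<mu>) v)"
  proof (cases "v \<in> C")
    case True
    have "\<mu> v \<ge> 0" using xs mu_nonneg by simp
    then have "real (nat \<lfloor>\<mu> v\<rfloor>) = of_int \<lfloor>\<mu> v\<rfloor>" by simp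
    moreover have "g v = frac (\<mu> v)" using assms(2) by (auto simp: fr_def)
    ultimately show ?thesis using True by (simp add: count_flo frac_def)
  next
    case False
    have "g v = frac (\<mu> v)" using assms(2) by (auto simp: fr_def)
    then show ?thesis using xs mu_out False by (simp add: count_flo)
  qed
qed

lemma gen_equiv:
  assumes g: "g \<in> G" and YC: "set_mset Y \<subseteq> C"
  shows "Y \<in> CSg g \<longleftrightarrow> (\<exists>U\<in>Gen g. U \<subseteq># Y)"
proof (cases "g = (\<lambda>v. 0)")
  case True
  obtain zs where zs: "mset zs = Y" using ex_mset by blast
  have zC: "set zs \<subseteq> C" using zs YC by auto
  have "(\<lambda>v. g v + real (count Y v)) = mu zs" using mu_mset[OF zC] zs True by simp
  moreover have "set zs \<subseteq> A" using zC CA by auto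
  ultimately have "Y \<in> CSg g" using YC unfolding CSg_def CS_def by blast
  then show ?thesis using True by (simp add: Gen_def)
next
  case False
  show ?thesis
  proof
    assume "\<exists>U\<in>Gen g. U \<subseteq># Y"
    then obtain U where "U \<in> CSg g" "U \<subseteq># Y" using False by (auto simp: Gen_def)
    then show "Y \<in> CSg g" using up_closed YC by blast
  next
    assume "Y \<in> CSg g"
    then obtain xs where xs: "set xs \<subseteq> A" "(\<lambda>v. g v + real (count Y v)) = mu xs"
      by (auto simp: CSg_def CS_def)
    obtain ys where ys: "set ys \<subseteq> A" "length ys < card G" "\<forall>v. mu ys v \<le> mu xs v \<and> mu xs v - mu ys v \<in> \<int>"
      using gen_exists[OF xs(1)] by blast
    define U where "U = flo (mu ys)"
    have frg: "fr (mu ys) = g"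
    proof
      fix v
      have "frac (mu ys v) = frac (mu xs v)"
      proof -
        obtain k where k: "mu xs v - mu ys v = of_int k" using ys(3) by (meson Ints_cases)
        then have "mu xs v = mu ys v + of_int k" by simp
        then show ?thesis by (simp add: frac_add_of_int_right)
      qed
      also have "\<dots> = frac (g v + real (count Y v))" using fun_cong[OF xs(2), of v] by simp
      also have "\<dots> = g v" using G_props(1)[OF g, of v] by (simp add: frac_small)
      finally show "fr (mu ys) v = g v" by (simp add: fr_def)
    qed
    have msU: "mu ys = (\<lambda>v. g v + real (count U v))"
      unfolding U_def by (rule decomp[OF _ frg]) (use ys(1) in \<open>auto simp: CS_def\<close>)
    have "(\<lambda>v. g v + real (count U v)) \<in> CS" unfolding CS_def
      using msU ys(1) by (intro CollectI exI[of _ ys]) simp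
    then have UC: "U \<in> CSg g" using set_flo unfolding U_def CSg_def by simp
    have "U \<subseteq># Y"
    proof (rule mset_subset_eqI)
      fix v
      have "real (count U v) = mu ys v - g v" using fun_cong[OF msU, of v] by simp
      also have "\<dots> \<le> mu xs v - g v" using ys(3) by simp
      also have "\<dots> = real (count Y v)" using fun_cong[OF xs(2), of v] by simp
      finally show "count U v \<le> count Y v" by simp
    qed
    moreover have "sum g C + real (size U) < real (card G)"
    proof -
      have "real (size U) = (\<Sum>v\<in>C. real (count U v))"
        using size_as_sum[OF finC set_flo[of "mu ys"]] by (simp add: U_def)
      then have "sum g C + real (size U) = sum (mu ys) C" by (simp add: msU sum.distrib)
      also have "\<dots> = real (length ys)" using mu_sum[OF ys(1)] .
      finally show ?thesis using ys(2) by simp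
    qed
    ultimately show "\<exists>U\<in>Gen g. U \<subseteq># Y" using UC False by (auto simp: Gen_def)
  qed
qed

definition cg :: "(real^'n \<Rightarrow> real) \<Rightarrow> nat" where
  "cg g = (if g = (\<lambda>v. 0) then 0 else card G - 1 - lev g)"

lemma Gen_bound:
  assumes g: "g \<in> G" and U: "U \<in> Gen g"
  shows "set_mset U \<subseteq> C \<and> (\<forall>v. count U v \<le> cg g)"
proof (cases "g = (\<lambda>v. 0)")
  case True then show ?thesis using U by (simp add: Gen_def cg_def)
next
  case False
  then have U': "U \<in> CSg g" "sum g C + real (size U) < real (card G)" using U by (auto simp: Gen_def)
  then have "lev g + size U < card G" using lev[OF g] by linarith
  then have "size U \<le> cg g" using False by (simp add: cg_def)
  moreover have "count U v \<le> size U" for v by (simp add: count_le_size)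
  ultimately show ?thesis using U' by (auto simp: CSg_def intro: order_trans)
qed

end

context splx
begin

lemma size_flo: "real (size (flo \<mu>)) = (\<Sum>v\<in>C. real (count (flo \<mu>) v))"
  using size_as_sum[OF finC set_flo[of \<mu>]] by simp

lemma class_count:
  assumes g: "g \<in> G"
  shows "card {\<mu>\<in>CS. sum \<mu> C = real h \<and> fr \<mu> = g} =
    (if int h - int (lev g) < 0 then 0
     else card {Y \<in> multisets_of_size C (nat (int h - int (lev g))). \<exists>U\<in>Gen g. U \<subseteq># Y})"
proof -
  define S where "S = {\<mu>\<in>CS. sum \<mu> C = real h \<and> fr \<mu> = g}"
  have sizeS: "real (size (flo \<mu>)) = real h - real (lev g)" if "\<mu> \<in> S" for \<mu>
  proof -
    have mu: "\<mu> \<in> CS" "fr \<mu> = g" "sum \<mu> C = real h" using that by (auto simp: S_def)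
    have "real (size (flo \<mu>)) = (\<Sum>v\<in>C. \<mu> v - g v)"
      unfolding size_flo
    proof (rule sum.cong[OF refl])
      fix v show "real (count (flo \<mu>) v) = \<mu> v - g v"
        using fun_cong[OF decomp[OF mu(1) mu(2)], of v] by linarith
    qed
    also have "\<dots> = real h - real (lev g)" using mu(3) lev[OF g] by (simp add: sum_subtractf)
    finally show ?thesis .
  qed
  show ?thesis
  proof (cases "int h - int (lev g) < 0")
    case True
    have "S = {}"
    proof (rule ccontr)
      assume "S \<noteq> {}"
      then obtain \<mu> where "\<mu> \<in> S" by blast
      from sizeS[OF this] True show False by simp
    qed
    then show ?thesis using True unfolding S_def[symmetric] by simp
  next
    case False
    define m where "m = h - lev g"
    have nm: "nat (int h - int (lev g)) = m" using False by (simp add: m_def)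
    define T where "T = {Y \<in> multisets_of_size C m. Y \<in> CSg g}"
    have T: "{Y \<in> multisets_of_size C m. \<exists>U\<in>Gen g. U \<subseteq># Y} = T"
      unfolding T_def using gen_equiv[OF g] by (auto simp: multisets_of_size_def)
    define \<psi> where "\<psi> Y = (\<lambda>v. g v + real (count Y v))" for Y :: "(real^'n) multiset"
    have "bij_betw flo S T"
    proof (rule bij_betw_byWitness[where f' = \<psi>])
      show "\<forall>\<mu>\<in>S. \<psi> (flo \<mu>) = \<mu>"
        unfolding \<psi>_def using decomp by (auto simp: S_def)
      show "\<forall>Y\<in>T. flo (\<psi> Y) = Y"
      proof
        fix Y assume Y: "Y \<in> T"
        then have YC: "set_mset Y \<subseteq> C" by (simp add: T_def multisets_of_size_def)
        show "flo (\<psi> Y) = Y"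
        proof (rule multiset_eqI)
          fix v
          show "count (flo (\<psi> Y)) v = count Y v"
          proof (cases "v \<in> C")
            case True
            have "nat \<lfloor>g v + real (count Y v)\<rfloor> = count Y v"
              using G_props(1)[OF g, of v] by (intro floor_small) auto
            then show ?thesis using True by (simp only: count_flo \<psi>_def if_True)
          next
            case False
            then have "v \<notin># Y" using YC by auto
            then show ?thesis using False by (simp add: count_flo not_in_iff)
          qed
        qed
      qed
      show "flo ` S \<subseteq> T"
      proof
        fix Y assume "Y \<in> flo ` S"
        then obtain \<mu> where \<mu>: "\<mu> \<in> S" "Y = flo \<mu>" by blast
        have mu: "\<mu> \<in> CS" "fr \<mu> = g" using \<mu>(1) by (auto simp: S_def)
        have "size Y = m" using sizeS[OF \<mu>(1)] \<mu>(2) by (simp add: m_def)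
        moreover have "\<psi> Y \<in> CS" using decomp[OF mu] mu(1) \<mu>(2) by (simp add: \<psi>_def)
        ultimately show "Y \<in> T" using set_flo \<mu>(2)
          by (simp add: T_def multisets_of_size_def CSg_def \<psi>_def)
      qed
      show "\<psi> ` T \<subseteq> S"
      proof
        fix \<mu> assume "\<mu> \<in> \<psi> ` T"
        then obtain Y where Y: "Y \<in> T" "\<mu> = \<psi> Y" by blast
        have YC: "set_mset Y \<subseteq> C" and sY: "size Y = m" and YCS: "\<psi> Y \<in> CS"
          using Y(1) by (auto simp: T_def multisets_of_size_def CSg_def \<psi>_def)
        have "sum (\<psi> Y) C = sum g C + (\<Sum>v\<in>C. real (count Y v))"
          by (simp add: \<psi>_def sum.distrib)
        also have "(\<Sum>v\<in>C. real (count Y v)) = real (size Y)"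
          using size_as_sum[OF finC YC] by simp
        also have "sum g C + real (size Y) = real h"
          using sY lev[OF g] False by (simp add: m_def)
        finally have "sum (\<psi> Y) C = real h" .
        moreover have "fr (\<psi> Y) = g"
          using G_props(1)[OF g] by (auto simp: fr_def \<psi>_def frac_small)
        ultimately show "\<mu> \<in> S" using Y(2) YCS by (simp add: S_def)
      qed
    qed
    then have "card S = card T" by (rule bij_betw_same_card)
    then show ?thesis using False T nm by (simp add: S_def)
  qed
qed

lemma finite_level: "finite {\<mu>\<in>CS. sum \<mu> C = real h}"
proof -
  have "{\<mu>\<in>CS. sum \<mu> C = real h} \<subseteq> mu ` {xs. set xs \<subseteq> A \<and> length xs = h}"
  proof
    fix \<mu> assume "\<mu> \<in> {\<mu>\<in>CS. sum \<mu> C = real h}"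
    then obtain xs where xs: "set xs \<subseteq> A" "\<mu> = mu xs" "sum \<mu> C = real h" by (auto simp: CS_def)
    then have "length xs = h" using mu_sum[OF xs(1)] by simp
    then show "\<mu> \<in> mu ` {xs. set xs \<subseteq> A \<and> length xs = h}" using xs by blast
  qed
  moreover have "finite {xs. set xs \<subseteq> A \<and> length xs = h}"
    using finite_lists_length_eq[OF finA] by simp
  ultimately show ?thesis by (meson finite_imageI finite_subset)
qed

lemma total_count:
  "card {\<mu>\<in>CS. sum \<mu> C = real h} = (\<Sum>g\<in>G. card {\<mu>\<in>CS. sum \<mu> C = real h \<and> fr \<mu> = g})"
proof -
  have eq: "{\<mu>\<in>CS. sum \<mu> C = real h} = (\<Union>g\<in>G. {\<mu>\<in>CS. sum \<mu> C = real h \<and> fr \<mu> = g})"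
    using fr_mu_G by (auto simp: CS_def)
  have fin: "finite {\<mu>\<in>CS. sum \<mu> C = real h \<and> fr \<mu> = g}" for g
    by (rule finite_subset[OF _ finite_level[of h]]) auto
  show ?thesis unfolding eq
    by (rule card_UN_disjoint[OF finite_G]) (use fin in auto)
qed

end

context splx
begin

lemma final_poly:
  "\<exists>P::rat poly. \<forall>h::nat. int h \<ge> int (card C) * int (card G) - 3 * int (card C) + 2 \<longrightarrow>
      of_nat (card (sumset h A)) = poly P (of_nat h)"
proof -
  define k where "k = card C"
  have Cne: "C \<noteq> {}" using cC by auto
  have k1: "k \<ge> 1" using cC by (simp add: k_def)
  have per: "\<exists>p::rat poly. \<forall>h::nat. int h \<ge> int k * int (card G) - 3 * int k + 2 \<longrightarrow>
      of_nat (card {\<mu>\<in>CS. sum \<mu> C = real h \<and> fr \<mu> = g}) = poly p (of_nat h)" if g: "g \<in> G" for g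
  proof (cases "Gen g = {}")
    case True
    have "card {\<mu>\<in>CS. sum \<mu> C = real h \<and> fr \<mu> = g} = 0" for h
      using class_count[OF g, of h] True by simp
    then show ?thesis by (intro exI[of _ 0]) simp
  next
    case False
    have gb: "\<And>U. U \<in> Gen g \<Longrightarrow> set_mset U \<subseteq> C \<and> (\<forall>i. count U i \<le> cg g)"
      using Gen_bound[OF g] by blast
    note ex = count_lemma[OF finC Cne, where Gen="Gen g" and c="cg g", OF gb]
    have ex2: "\<exists>q::rat poly. \<forall>n::int. n \<ge> int (card C) * (int (cg g) - 1) + 1 \<longrightarrow>
        of_nat (if n < 0 then 0 else card {Y \<in> multisets_of_size C (nat n). \<exists>U\<in>Gen g. U \<subseteq># Y})
          = poly q (of_int n)"
      by (rule ex) simp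
    from ex2 obtain q :: "rat poly" where q: "\<forall>n::int. n \<ge> int (card C) * (int (cg g) - 1) + 1 \<longrightarrow>
        of_nat (if n < 0 then 0 else card {Y \<in> multisets_of_size C (nat n). \<exists>U\<in>Gen g. U \<subseteq># Y})
          = poly q (of_int n)"
      by (elim exE) (rule that)
    define p where "p = pcompose q [:- of_nat (lev g), 1:]"
    show ?thesis
    proof (intro exI[of _ p] allI impI)
      fix h :: nat assume h: "int h \<ge> int k * int (card G) - 3 * int k + 2"
      have thr: "int h - int (lev g) \<ge> int k * (int (cg g) - 1) + 1"
      proof (cases "g = (\<lambda>v. 0)")
        case True
        then have "lev g = 0" "cg g = 0" by (simp_all add: lev_def cg_def)
        then show ?thesis using k1 by simp
      next
        case gne: False
        obtain U where "U \<in> Gen g" using False by blast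
        then have "sum g C + real (size U) < real (card G)" using gne by (simp add: Gen_def)
        then have lt: "lev g + size U < card G" using lev[OF g] by linarith
        then have cgv: "int (cg g) = int (card G) - 1 - int (lev g)" using gne by (simp add: cg_def)
        have l1: "lev g \<ge> 1" using lev_pos[OF g gne] .
        have e: "int k * int (cg g) = int k * int (card G) - int k - int k * int (lev g)"
          by (simp add: cgv algebra_simps)
        have "(int k - 1) * 1 \<le> (int k - 1) * int (lev g)"
          using l1 k1 by (intro mult_left_mono) auto
        then have m: "int k * int (lev g) - int (lev g) \<ge> int k - 1" by (simp add: algebra_simps)
        have "int k * (int (cg g) - 1) + 1 = int k * int (cg g) - int k + 1" by (simp add: algebra_simps)
        then show ?thesis using h e m by linarith
      qed
      have "(of_nat (card {\<mu>\<in>CS. sum \<mu> C = real h \<and> fr \<mu> = g}) :: rat)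
          = of_nat (if int h - int (lev g) < 0 then 0
              else card {Y \<in> multisets_of_size C (nat (int h - int (lev g))). \<exists>U\<in>Gen g. U \<subseteq># Y})"
        by (simp only: class_count[OF g])
      also have "\<dots> = poly q (of_int (int h - int (lev g)))"
        using q thr unfolding k_def by blast
      also have "\<dots> = poly p (of_nat h)" by (simp add: p_def poly_pcompose)
      finally show "of_nat (card {\<mu>\<in>CS. sum \<mu> C = real h \<and> fr \<mu> = g}) = poly p (of_nat h)" .
    qed
  qed
  then have "\<forall>g\<in>G. \<exists>p::rat poly. \<forall>h::nat. int h \<ge> int k * int (card G) - 3 * int k + 2 \<longrightarrow>
      of_nat (card {\<mu>\<in>CS. sum \<mu> C = real h \<and> fr \<mu> = g}) = poly p (of_nat h)" by blast
  from bchoice[OF this] obtain p :: "(real^'n \<Rightarrow> real) \<Rightarrow> rat poly" where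
    p: "\<And>g. g \<in> G \<Longrightarrow> \<forall>h::nat. int h \<ge> int k * int (card G) - 3 * int k + 2 \<longrightarrow>
      of_nat (card {\<mu>\<in>CS. sum \<mu> C = real h \<and> fr \<mu> = g}) = poly (p g) (of_nat h)" by blast
  show ?thesis
  proof (intro exI[of _ "\<Sum>g\<in>G. p g"] allI impI)
    fix h :: nat assume h: "int h \<ge> int (card C) * int (card G) - 3 * int (card C) + 2"
    have "(of_nat (card (sumset h A)) :: rat) = of_nat (\<Sum>g\<in>G. card {\<mu>\<in>CS. sum \<mu> C = real h \<and> fr \<mu> = g})"
      by (simp only: card_sumset total_count)
    also have "\<dots> = (\<Sum>g\<in>G. of_nat (card {\<mu>\<in>CS. sum \<mu> C = real h \<and> fr \<mu> = g}))"
      by (rule of_nat_sum)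
    also have "\<dots> = (\<Sum>g\<in>G. poly (p g) (of_nat h))"
      using p h unfolding k_def by (intro sum.cong) auto
    also have "\<dots> = poly (\<Sum>g\<in>G. p g) (of_nat h)" by (simp add: poly_sum)
    finally show "of_nat (card (sumset h A)) = poly (\<Sum>g\<in>G. p g) (of_nat h)" .
  qed
qed

end

theorem theorem1p4:
  fixes A :: "(real ^ 'n) set"
  assumes "finite A"
    and "A \<subseteq> int_points"
    and "add_subgroup_gen (diffset A) = int_points"
    and "int CARD('n) simplex (convex hull A)"
  shows "\<exists>p :: rat poly. \<forall>h :: nat.
           real h \<ge> measure lebesgue (convex hull A) * fact (CARD('n) + 1) - 1 - 3 * real CARD('n)
           \<longrightarrow> rat_of_nat (card (sumset h A)) = poly p (rat_of_nat h)"
proof -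
  obtain C where C: "\<not> affine_dependent C" "int (card C) = int CARD('n) + 1" "convex hull A = convex hull C"
    using assms(4) unfolding simplex_def by auto
  have cC: "card C = CARD('n) + 1" using C(2) by simp
  have CA: "C \<subseteq> A"
  proof
    fix v assume "v \<in> C"
    then have "v extreme_point_of (convex hull C)"
      using extreme_point_of_convex_hull_affine_independent[OF C(1)] by blast
    then have "v extreme_point_of (convex hull A)" using C(3) by simp
    then show "v \<in> A" by (rule extreme_point_of_convex_hull)
  qed
  interpret splx A C using assms(1,2) C(1,3) cC CA by unfold_locales
  obtain P :: "rat poly" where P: "\<forall>h::nat. int h \<ge> int (card C) * int (card G) - 3 * int (card C) + 2 \<longrightarrow>
      of_nat (card (sumset h A)) = poly P (of_nat h)"
    using final_poly by blast
  show ?thesis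
  proof (intro exI[of _ P] allI impI)
    fix h :: nat
    assume h: "real h \<ge> measure lebesgue (convex hull A) * fact (CARD('n) + 1) - 1 - 3 * real CARD('n)"
    define vol where "vol = measure lebesgue (convex hull A)"
    have cg: "real (card G) \<le> fact CARD('n) * vol" using card_G_bound C(3) by (simp add: vol_def)
    have "real (card C) * real (card G) \<le> real (card C) * (fact CARD('n) * vol)"
      by (intro mult_left_mono cg) simp
    also have "\<dots> = vol * fact (CARD('n) + 1)" using cC by (simp add: algebra_simps)
    finally have X: "real (card C) * real (card G) \<le> vol * fact (CARD('n) + 1)" .
    have rc: "real (card C) = real CARD('n) + 1" using cC by simp
    have "real (card C) * real (card G) - 3 * real (card C) + 2 \<le> real h"
      using X h rc unfolding vol_def by linarith
    then have "real_of_int (int (card C) * int (card G) - 3 * int (card C) + 2) \<le> real_of_int (int h)"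
      by simp
    then have "int h \<ge> int (card C) * int (card G) - 3 * int (card C) + 2" by (simp only: of_int_le_iff)
    then show "rat_of_nat (card (sumset h A)) = poly P (rat_of_nat h)" using P by blast
  qed
qed

end
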